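(* Let $0<\delta\le\rho\le r\le1$ and let $L,\tilde L\subset\mathcal{L}_{SL_2}$ be finite. (i) Suppose $\tilde L$ is $\rho$-separated and contained in a ball of radius $r$. Then there is $\tilde L'\subset\tilde L$ with $\#\tilde L'\gtrsim(\rho/r)\#\tilde L$ such that $\#(\tilde L'\cap B)\le(s/\rho)^2$ for every $s\in[\rho,1]$ and every ball $B\subset\mathbb{R}^4$ of radius $s$. (ii) Suppose $\#(L\cap B)\le(s/\delta)^2$ for every $s\in[\delta,1]$ and every ball $B\subset\mathbb{R}^4$ of radius $s$, and $L\subset\bigcup_{\tilde\ell\in\tilde L}B(\tilde\ell,\rho)$. Then for every $\varepsilon>0$ there exist $c=c(\varepsilon)>0$ and $\tilde L'\subset\tilde L$ with $\#\tilde L'\gtrsim c\,\delta^{\varepsilon}(\delta/\rho)^2\#L$ such that $\#(\tilde L'\cap B)\le(s/\rho)^2$ for every $s\in[\rho,1]$ and every ball $B\subset\mathbb{R}^4$ of radius $s$.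
   Context: For $(a,b,c,d)\in\mathbb{R}^4$ with $ad-bc=1$, $\ell_{(a,b,c,d)}=\{(a,b,0)+s(c,d,1):s\in\mathbb{R}\}$; $\mathcal{L}_{SL_2}$ is the set of such lines, each identified with its parameter in $\mathbb{R}^4$; separation, balls and distances are taken in parameter space with the Euclidean metric. A number $R\ge1$ is fixed and only lines with parameter in $B(0,R)\subset\mathbb{R}^4$ are considered; $X\lesssim Y$ means $X\le CY$ with $C$ depending only on $R$. *)

theory Defs
  imports "HOL-Analysis.Analysis"
begin

text \<open>A line ell_(a,b,c,d) is identified with its parameter (a,b,c,d) in R^4;
  the parameters of lines in L_SL2 are those with ad - bc = 1.\<close>
definition SL2_lines :: "(real^4) set" where
  "SL2_lines = {p. p$1 * p$4 - p$2 * p$3 = 1}"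

definition SL2_lines_R :: "real \<Rightarrow> (real^4) set" where
  "SL2_lines_R R = SL2_lines \<inter> ball 0 R"

definition separated :: "real \<Rightarrow> (real^4) set \<Rightarrow> bool" where
  "separated \<rho> A \<longleftrightarrow> (\<forall>x\<in>A. \<forall>y\<in>A. x \<noteq> y \<longrightarrow> dist x y \<ge> \<rho>)"

definition two_dim_cond :: "real \<Rightarrow> (real^4) set \<Rightarrow> bool" where
  "two_dim_cond t A \<longleftrightarrow>
     (\<forall>s\<in>{t..1}. \<forall>x::real^4. real (card (A \<inter> ball x s)) \<le> (s / t)^2)"

end

theory Submission
  imports Defs
begin


lemma dist4_sq: "(dist (p::real^4) q)^2 = (p$1-q$1)^2 + (p$2-q$2)^2 + (p$3-q$3)^2 + (p$4-q$4)^2"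
  unfolding dist_norm norm_vec_def L2_set_def
  by (simp add: sum_4 sum_nonneg)

lemma coord_lt: "p \<in> ball 0 R \<Longrightarrow> \<bar>(p::real^4)$i\<bar> < R"
  using Finite_Cartesian_Product.norm_nth_le[of p i] by (simp add: dist_norm)

lemma SL2_big: "p \<in> SL2_lines \<Longrightarrow> \<exists>k. \<bar>(p::real^4)$k\<bar> \<ge> 1/2"
proof (rule ccontr)
  assume a: "p \<in> SL2_lines" and "\<not> (\<exists>k. \<bar>p$k\<bar> \<ge> 1/2)"
  then have h: "\<And>k. \<bar>p$k\<bar> < 1/2" by (meson not_le)
  have "\<bar>p$1\<bar> * \<bar>p$4\<bar> \<le> (1/2)*(1/2)" using h[of 1] h[of 4]
    by (intro mult_mono) auto
  moreover have "\<bar>p$2\<bar> * \<bar>p$3\<bar> \<le> (1/2)*(1/2)" using h[of 2] h[of 3]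
    by (intro mult_mono) auto
  moreover have "p$1*p$4 \<le> \<bar>p$1\<bar> * \<bar>p$4\<bar>" by (metis abs_ge_self abs_mult)
  moreover have "- (p$2*p$3) \<le> \<bar>p$2\<bar> * \<bar>p$3\<bar>" by (metis abs_ge_minus_self abs_mult)
  moreover have "p$1*p$4 - p$2*p$3 = 1" using a by (simp add: SL2_lines_def)
  ultimately show False by linarith
qed

lemma alg:
  fixes a b c d a' b' c' d' R h :: real
  assumes "a*d - b*c = a'*d' - b'*c'" "\<bar>d\<bar> \<ge> 1/2" "\<bar>b\<bar> \<le> R" "\<bar>c'\<bar> \<le> R" "\<bar>a'\<bar> \<le> R"
    "\<bar>b-b'\<bar> < h" "\<bar>c-c'\<bar> < h" "\<bar>d-d'\<bar> < h"
  shows "\<bar>a-a'\<bar> \<le> 6*R*h"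
proof -
  have e: "(a-a')*d = b*(c-c') + c'*(b-b') - a'*(d-d')" using assms(1) by (simp add: algebra_simps)
  have R0: "R \<ge> 0" using assms(3) by linarith
  have "\<bar>b*(c-c')\<bar> \<le> R*h" unfolding abs_mult using assms(3,7) R0
    by (simp add: mult_mono)
  moreover have "\<bar>c'*(b-b')\<bar> \<le> R*h" unfolding abs_mult using assms(4,6) R0
    by (simp add: mult_mono)
  moreover have "\<bar>a'*(d-d')\<bar> \<le> R*h" unfolding abs_mult using assms(5,8) R0
    by (simp add: mult_mono)
  ultimately have "\<bar>(a-a')*d\<bar> \<le> 3*(R*h)" unfolding e by linarith
  moreover have "\<bar>a-a'\<bar> * (1/2) \<le> \<bar>a-a'\<bar> * \<bar>d\<bar>"
    using assms(2) by (intro mult_left_mono) auto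
  ultimately have "\<bar>a-a'\<bar> * (1/2) \<le> 3*(R*h)" unfolding abs_mult by linarith
  moreover have "\<bar>a-a'\<bar> = 2*(\<bar>a-a'\<bar> * (1/2))" by simp
  ultimately have "\<bar>a-a'\<bar> \<le> 6*(R*h)" by linarith
  thus ?thesis by (simp add: mult.assoc)
qed

lemma floor_eq_close: assumes "h > 0" "floor (u/h) = floor (v/h)" shows "\<bar>u - v\<bar> < (h::real)"
proof -
  define n where "n = real_of_int (floor (u/h))"
  have a: "n \<le> u/h" "u/h < n + 1" unfolding n_def by linarith+
  have b: "n \<le> v/h" "v/h < n + 1" unfolding n_def assms(2) by linarith+
  have "u/h - v/h < 1" "v/h - u/h < 1" using a b by linarith+
  hence "(u - v)/h < 1" "(v - u)/h < 1" by (simp_all add: diff_divide_distrib)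
  hence "u - v < h" "v - u < h" using assms(1) by (simp_all add: divide_less_eq)
  thus ?thesis by (simp add: abs_less_iff)
qed



lemma card_Icc_bound:
  assumes "h > 0" "t > 0"
  shows "real (card {floor ((y - t)/h) .. floor ((y + t)/h)}) \<le> 2*t/h + 2"
proof -
  have a: "real_of_int (floor ((y + t)/h)) \<le> (y+t)/h" by simp
  have b: "real_of_int (floor ((y - t)/h)) > (y-t)/h - 1" by linarith
  have c: "(y+t)/h - ((y-t)/h - 1) + 1 = 2*t/h + 2" using assms by (simp add: field_simps)
  have "floor ((y - t)/h) \<le> floor ((y + t)/h)" using assms by (intro floor_mono) (simp add: divide_right_mono)
  hence "real (card {floor ((y - t)/h) .. floor ((y + t)/h)}) = real_of_int (floor ((y + t)/h)) - real_of_int (floor ((y - t)/h)) + 1"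
    by simp
  thus ?thesis using a b c by linarith
qed

lemma coord_in_range:
  assumes "h > 0" "(p::real^4) \<in> ball x t"
  shows "floor (p$j/h) \<in> {floor ((x$j - t)/h) .. floor ((x$j + t)/h)}"
proof -
  have "dist (x$j) (p$j) < t" using assms(2) dist_vec_nth_le[of x j p] by simp
  hence "x$j - t \<le> p$j" "p$j \<le> x$j + t" by (auto simp: dist_real_def)
  thus ?thesis using assms(1) by (auto intro!: floor_mono divide_right_mono)
qed

lemma grid_count:
  fixes A :: "(real^4) set" and h t :: real and i1 i2 i3 :: 4
  assumes h: "h > 0" and t: "t > 0" and sub: "A \<subseteq> ball x t"
    and inj: "\<And>p q. p \<in> A \<Longrightarrow> q \<in> A \<Longrightarrow> floor (p$i1/h) = floor (q$i1/h) \<Longrightarrow>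
       floor (p$i2/h) = floor (q$i2/h) \<Longrightarrow> floor (p$i3/h) = floor (q$i3/h) \<Longrightarrow> p = q"
  shows "finite A \<and> real (card A) \<le> (2*t/h + 2)^3"
proof -
  define g where "g = (\<lambda>p::real^4. (floor (p$i1/h), floor (p$i2/h), floor (p$i3/h)))"
  define I where "I = (\<lambda>j::4. {floor ((x$j - t)/h) .. floor ((x$j + t)/h)})"
  have ij: "inj_on g A" unfolding inj_on_def g_def using inj by auto
  have sub2: "g ` A \<subseteq> I i1 \<times> I i2 \<times> I i3"
    using sub coord_in_range[OF h] unfolding g_def I_def by blast
  have fin: "finite (I i1 \<times> I i2 \<times> I i3)" unfolding I_def by simp
  hence "finite (g ` A)" using sub2 finite_subset by blast
  hence finA: "finite A" using ij finite_imageD by blast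
  have "card A = card (g ` A)" using ij card_image by metis
  also have "\<dots> \<le> card (I i1 \<times> I i2 \<times> I i3)" using card_mono[OF fin sub2] .
  also have "\<dots> = card (I i1) * card (I i2) * card (I i3)" by (simp add: card_cartesian_product)
  finally have "real (card A) \<le> real (card (I i1)) * real (card (I i2)) * real (card (I i3))"
    by (metis of_nat_le_iff of_nat_mult)
  also have "\<dots> \<le> (2*t/h + 2) * (2*t/h + 2) * (2*t/h + 2)"
  proof -
    have cb: "\<And>j. real (card (I j)) \<le> 2*t/h + 2" unfolding I_def using card_Icc_bound[OF h t] by blast
    have B0: "0 \<le> 2*t/h + 2" using h t by simp
    have "real (card (I i1)) * real (card (I i2)) \<le> (2*t/h + 2) * (2*t/h + 2)"
      by (rule mult_mono[OF cb cb B0]) simp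
    thus ?thesis by (rule mult_mono[OF _ cb]) (use B0 in simp_all)
  qed
  finally show ?thesis using finA by (simp add: power3_eq_cube)
qed




lemma piece:
  fixes S :: "(real^4) set" and k m ia ib ic :: 4
  assumes R: "R \<ge> 1" and sep: "separated \<rho> S" and rho: "\<rho> > 0" "\<rho> \<le> t"
    and cov: "\<And>j. j = m \<or> j = ia \<or> j = ib \<or> j = ic"
    and lip: "\<And>p q h. h > 0 \<Longrightarrow> p \<in> S \<Longrightarrow> q \<in> S \<Longrightarrow> \<bar>p$k\<bar> \<ge> 1/2 \<Longrightarrow> \<bar>p$ia - q$ia\<bar> < h \<Longrightarrow>
        \<bar>p$ib - q$ib\<bar> < h \<Longrightarrow> \<bar>p$ic - q$ic\<bar> < h \<Longrightarrow> \<bar>p$m - q$m\<bar> \<le> 6*R*h"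
  shows "finite {p \<in> S \<inter> ball x t. \<bar>p$k\<bar> \<ge> 1/2} \<and>
         real (card {p \<in> S \<inter> ball x t. \<bar>p$k\<bar> \<ge> 1/2}) \<le> (52*R*t/\<rho>)^3"
proof -
  define h where "h = \<rho>/(25*R)"
  have h: "h > 0" unfolding h_def using R rho by simp
  have t: "t > 0" using rho by simp
  have hR: "24*R*h < \<rho>" unfolding h_def using R rho by (simp add: field_simps)
  have "finite {p \<in> S \<inter> ball x t. \<bar>p$k\<bar> \<ge> 1/2} \<and>
         real (card {p \<in> S \<inter> ball x t. \<bar>p$k\<bar> \<ge> 1/2}) \<le> (2*t/h + 2)^3"
  proof (rule grid_count[OF h t, of _ x ia ib ic])
    show "{p \<in> S \<inter> ball x t. 1 / 2 \<le> \<bar>p $ k\<bar>} \<subseteq> ball x t" by blast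
  next
    fix p q assume p: "p \<in> {p \<in> S \<inter> ball x t. 1 / 2 \<le> \<bar>p $ k\<bar>}" and q: "q \<in> {p \<in> S \<inter> ball x t. 1 / 2 \<le> \<bar>p $ k\<bar>}"
      and f1: "floor (p$ia/h) = floor (q$ia/h)" and f2: "floor (p$ib/h) = floor (q$ib/h)"
      and f3: "floor (p$ic/h) = floor (q$ic/h)"
    have d1: "\<bar>p$ia - q$ia\<bar> < h" using floor_eq_close[OF h f1] .
    have d2: "\<bar>p$ib - q$ib\<bar> < h" using floor_eq_close[OF h f2] .
    have d3: "\<bar>p$ic - q$ic\<bar> < h" using floor_eq_close[OF h f3] .
    have dm: "\<bar>p$m - q$m\<bar> \<le> 6*R*h" using lip[OF h _ _ _ d1 d2 d3] p q by blast
    have hh: "h \<le> 6*R*h" using h R by simp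
    have all: "\<bar>(p - q)$j\<bar> \<le> 6*R*h" for j
      using cov[of j] d1 d2 d3 dm hh by auto
    have "dist p q \<le> (\<Sum>j\<in>UNIV. \<bar>(p - q)$j\<bar>)" unfolding dist_norm by (rule norm_le_l1_cart)
    also have "\<dots> \<le> of_nat (card (UNIV::4 set)) * (6*R*h)" by (rule sum_bounded_above) (use all in auto)
    also have "\<dots> = 24*R*h" by simp
    finally have "dist p q < \<rho>" using hR by linarith
    thus "p = q" using sep p q unfolding separated_def by force
  qed
  moreover have "2*t/h + 2 \<le> 52*R*t/\<rho>"
  proof -
    have e: "2*t/h = 50*R*t/\<rho>" unfolding h_def using R rho by (simp add: field_simps)
    have "1*t \<le> R*t" using R rho by (intro mult_right_mono) auto
    hence "\<rho> \<le> R*t" using rho by linarith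
    hence "2 \<le> 2*R*t/\<rho>" using rho by (simp add: field_simps)
    with e have "2*t/h + 2 \<le> 50*R*t/\<rho> + 2*R*t/\<rho>" by linarith
    thus ?thesis by (simp add: field_simps)
  qed
  moreover have "0 \<le> 2*t/h + 2" using h t by simp
  ultimately show ?thesis by (meson order_trans power_mono)
qed




lemma SL2R_facts:
  assumes "p \<in> SL2_lines_R R"
  shows "p$1*p$4 - p$2*p$3 = 1" "\<And>j. \<bar>p$j\<bar> \<le> R"
  using assms coord_lt[of p R] unfolding SL2_lines_R_def SL2_lines_def
  by (auto intro: less_imp_le)

lemma packing:
  fixes S :: "(real^4) set"
  assumes R: "R \<ge> 1" and SS: "S \<subseteq> SL2_lines_R R" and sep: "separated \<rho> S"
    and rho: "\<rho> > 0" "\<rho> \<le> t"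
  shows "finite (S \<inter> ball x t) \<and> real (card (S \<inter> ball x t)) \<le> 4*(52*R*t/\<rho>)^3"
proof -
  define A where "A = (\<lambda>k::4. {p \<in> S \<inter> ball x t. \<bar>p$k\<bar> \<ge> 1/2})"
  have F: "\<And>p. p \<in> S \<Longrightarrow> p$1*p$4 - p$2*p$3 = 1 \<and> (\<forall>j. \<bar>p$j\<bar> \<le> R)"
    using SS SL2R_facts by blast
  have A4: "finite (A 4) \<and> real (card (A 4)) \<le> (52*R*t/\<rho>)^3"
    unfolding A_def
  proof (rule piece[OF R sep rho, where m=1 and ia=2 and ib=3 and ic=4])
    show "\<And>j::4. j = 1 \<or> j = 2 \<or> j = 3 \<or> j = 4" using exhaust_4 by blast
  next
    fix p q :: "real^4" and h :: real
    assume "0 < h" "p \<in> S" "q \<in> S" "1/2 \<le> \<bar>p$4\<bar>" "\<bar>p$2 - q$2\<bar> < h" "\<bar>p$3 - q$3\<bar> < h" "\<bar>p$4 - q$4\<bar> < h"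
    thus "\<bar>p$1 - q$1\<bar> \<le> 6*R*h" using F[of p] F[of q]
      by (intro alg[where b="p$2" and c="p$3" and d="p$4" and b'="q$2" and c'="q$3" and d'="q$4"]) auto
  qed
  have A1: "finite (A 1) \<and> real (card (A 1)) \<le> (52*R*t/\<rho>)^3"
    unfolding A_def
  proof (rule piece[OF R sep rho, where m=4 and ia=1 and ib=2 and ic=3])
    show "\<And>j::4. j = 4 \<or> j = 1 \<or> j = 2 \<or> j = 3" using exhaust_4 by blast
  next
    fix p q :: "real^4" and h :: real
    assume "0 < h" "p \<in> S" "q \<in> S" "1/2 \<le> \<bar>p$1\<bar>" "\<bar>p$1 - q$1\<bar> < h" "\<bar>p$2 - q$2\<bar> < h" "\<bar>p$3 - q$3\<bar> < h"
    thus "\<bar>p$4 - q$4\<bar> \<le> 6*R*h" using F[of p] F[of q]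
      by (intro alg[where b="p$3" and c="p$2" and d="p$1" and b'="q$3" and c'="q$2" and d'="q$1"])
        (auto simp: algebra_simps)
  qed
  have A2: "finite (A 2) \<and> real (card (A 2)) \<le> (52*R*t/\<rho>)^3"
    unfolding A_def
  proof (rule piece[OF R sep rho, where m=3 and ia=1 and ib=2 and ic=4])
    show "\<And>j::4. j = 3 \<or> j = 1 \<or> j = 2 \<or> j = 4" using exhaust_4 by blast
  next
    fix p q :: "real^4" and h :: real
    assume "0 < h" "p \<in> S" "q \<in> S" "1/2 \<le> \<bar>p$2\<bar>" "\<bar>p$1 - q$1\<bar> < h" "\<bar>p$2 - q$2\<bar> < h" "\<bar>p$4 - q$4\<bar> < h"
    thus "\<bar>p$3 - q$3\<bar> \<le> 6*R*h" using F[of p] F[of q]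
      by (intro alg[where b="p$1" and c="p$4" and d="p$2" and b'="q$1" and c'="q$4" and d'="q$2"])
        (auto simp: algebra_simps)
  qed
  have A3: "finite (A 3) \<and> real (card (A 3)) \<le> (52*R*t/\<rho>)^3"
    unfolding A_def
  proof (rule piece[OF R sep rho, where m=2 and ia=1 and ib=3 and ic=4])
    show "\<And>j::4. j = 2 \<or> j = 1 \<or> j = 3 \<or> j = 4" using exhaust_4 by blast
  next
    fix p q :: "real^4" and h :: real
    assume "0 < h" "p \<in> S" "q \<in> S" "1/2 \<le> \<bar>p$3\<bar>" "\<bar>p$1 - q$1\<bar> < h" "\<bar>p$3 - q$3\<bar> < h" "\<bar>p$4 - q$4\<bar> < h"
    thus "\<bar>p$2 - q$2\<bar> \<le> 6*R*h" using F[of p] F[of q]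
      by (intro alg[where b="p$4" and c="p$1" and d="p$3" and b'="q$4" and c'="q$1" and d'="q$3"])
        (auto simp: algebra_simps)
  qed
  have sub: "S \<inter> ball x t \<subseteq> A 1 \<union> A 2 \<union> A 3 \<union> A 4"
  proof
    fix p assume p: "p \<in> S \<inter> ball x t"
    then obtain k where "\<bar>p$k\<bar> \<ge> 1/2" using SL2_big SS unfolding SL2_lines_R_def by blast
    thus "p \<in> A 1 \<union> A 2 \<union> A 3 \<union> A 4" using p exhaust_4[of k] unfolding A_def by auto
  qed
  have fin: "finite (A 1 \<union> A 2 \<union> A 3 \<union> A 4)" using A1 A2 A3 A4 by blast
  have "card (S \<inter> ball x t) \<le> card (A 1 \<union> A 2 \<union> A 3 \<union> A 4)" using card_mono[OF fin sub] .
  also have "\<dots> \<le> card (A 1) + card (A 2) + card (A 3) + card (A 4)"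
    by (meson add_mono_thms_linordered_semiring(3) card_Un_le le_trans)
  finally have "real (card (S \<inter> ball x t)) \<le> real (card (A 1)) + real (card (A 2)) + real (card (A 3)) + real (card (A 4))"
    by linarith
  thus ?thesis using A1 A2 A3 A4 fin sub finite_subset by (smt (verit))
qed




lemma two_dim_empty: "two_dim_cond t {}"
  unfolding two_dim_cond_def by simp

lemma greedy:
  assumes fin: "finite Lt" and rho: "0 < \<rho>" "\<rho> \<le> 1"
  shows "\<exists>Lt' a rad. Lt' \<subseteq> Lt \<and> two_dim_cond \<rho> Lt' \<and>
     (\<forall>l\<in>Lt. \<rho> \<le> rad l \<and> rad l \<le> 1 \<and> l \<in> ball (a l) (rad l) \<and>
        (rad l/\<rho>)^2 \<le> 2 * real (card (Lt' \<inter> ball (a l) (rad l))))"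
proof -
  define P where "P = {A. A \<subseteq> Lt \<and> two_dim_cond \<rho> A}"
  have finP: "finite P" unfolding P_def using fin by simp
  have neP: "{} \<in> P" unfolding P_def using two_dim_empty by simp
  have "Max (card ` P) \<in> card ` P" using finP neP by (intro Max_in) auto
  then obtain Lt' where LP: "Lt' \<in> P" and Lmax: "card Lt' = Max (card ` P)"
    by auto
  have maxc: "\<And>A. A \<in> P \<Longrightarrow> card A \<le> card Lt'" using Lmax finP by simp
  have sub: "Lt' \<subseteq> Lt" and cond: "two_dim_cond \<rho> Lt'" using LP unfolding P_def by auto
  have finL': "finite Lt'" using sub fin finite_subset by blast
  have key: "\<exists>x s. \<rho> \<le> s \<and> s \<le> 1 \<and> l \<in> ball x s \<and>
        (s/\<rho>)^2 \<le> 2 * real (card (Lt' \<inter> ball x s))" if l: "l \<in> Lt" for l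
  proof (cases "l \<in> Lt'")
    case True
    have "l \<in> Lt' \<inter> ball l \<rho>" using True rho by simp
    hence "card (Lt' \<inter> ball l \<rho>) \<ge> 1" using finL'
      by (metis One_nat_def Suc_leI card_gt_0_iff emptyE finite_Int)
    hence "(\<rho>/\<rho>)^2 \<le> 2 * real (card (Lt' \<inter> ball l \<rho>))" using rho by simp
    thus ?thesis using rho True by (intro exI[of _ l] exI[of _ \<rho>]) simp
  next
    case False
    have "card (insert l Lt') > card Lt'" using False finL' by simp
    hence "insert l Lt' \<notin> P" using maxc by (meson not_le)
    hence "\<not> two_dim_cond \<rho> (insert l Lt')" unfolding P_def using sub l by simp
    then obtain s x where s: "s \<in> {\<rho>..1}" and big: "real (card (insert l Lt' \<inter> ball x s)) > (s/\<rho>)^2"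
      unfolding two_dim_cond_def by (meson not_le)
    have small: "real (card (Lt' \<inter> ball x s)) \<le> (s/\<rho>)^2" using cond s unfolding two_dim_cond_def by blast
    have lin: "l \<in> ball x s"
    proof (rule ccontr)
      assume "l \<notin> ball x s"
      hence "insert l Lt' \<inter> ball x s = Lt' \<inter> ball x s" by auto
      thus False using big small by simp
    qed
    hence "insert l Lt' \<inter> ball x s = insert l (Lt' \<inter> ball x s)" by auto
    hence cc: "card (insert l Lt' \<inter> ball x s) = card (Lt' \<inter> ball x s) + 1" using False finL' by simp
    define c where "c = real (card (Lt' \<inter> ball x s))"
    have "s/\<rho> \<ge> 1" using s rho by simp
    hence q1: "(s/\<rho>)^2 \<ge> 1" by (rule one_le_power)
    have "c + 1 > (s/\<rho>)^2" using big cc unfolding c_def by simp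
    moreover have "c \<ge> 0" unfolding c_def by simp
    moreover have "c \<ge> 1"
    proof (cases "card (Lt' \<inter> ball x s) = 0")
      case True
      hence "c = 0" unfolding c_def by simp
      thus ?thesis using calculation q1 by linarith
    next
      case False
      thus ?thesis unfolding c_def by simp
    qed
    ultimately have "(s/\<rho>)^2 \<le> 2*c" by linarith
    thus ?thesis using s lin unfolding c_def by (intro exI[of _ x] exI[of _ s]) simp
  qed
  hence "\<forall>l\<in>Lt. \<exists>z. \<rho> \<le> snd z \<and> snd z \<le> 1 \<and> l \<in> ball (fst z) (snd z) \<and>
        (snd z/\<rho>)^2 \<le> 2 * real (card (Lt' \<inter> ball (fst z) (snd z)))"
    by (metis fst_conv snd_conv)
  then obtain f where f: "\<forall>l\<in>Lt. \<rho> \<le> snd (f l) \<and> snd (f l) \<le> 1 \<and> l \<in> ball (fst (f l)) (snd (f l)) \<and>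
        (snd (f l)/\<rho>)^2 \<le> 2 * real (card (Lt' \<inter> ball (fst (f l)) (snd (f l))))"
    by (rule bchoice[elim_format]) blast
  have "\<forall>l\<in>Lt. \<rho> \<le> (snd \<circ> f) l \<and> (snd \<circ> f) l \<le> 1 \<and> l \<in> ball ((fst \<circ> f) l) ((snd \<circ> f) l) \<and>
        ((snd \<circ> f) l/\<rho>)^2 \<le> 2 * real (card (Lt' \<inter> ball ((fst \<circ> f) l) ((snd \<circ> f) l)))"
    using f by simp
  thus ?thesis using sub cond by blast
qed

lemma cover_bound:
  assumes finL: "finite L" and LF: "L \<subseteq> (\<Union>y\<in>F. ball y 1)" and finF: "finite F"
    and cond: "two_dim_cond \<delta> L" and d: "0 < \<delta>" "\<delta> \<le> 1" "\<delta> \<le> t"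
  shows "real (card (L \<inter> ball x t)) \<le> (1 + real (card F)) * (t/\<delta>)^2"
proof (cases "t \<le> 1")
  case True
  hence "real (card (L \<inter> ball x t)) \<le> (t/\<delta>)^2" using cond d unfolding two_dim_cond_def by auto
  moreover have "1*(t/\<delta>)^2 \<le> (1 + real (card F)) * (t/\<delta>)^2" by (intro mult_right_mono) auto
  ultimately show ?thesis by linarith
next
  case False
  have u1: "\<And>y. real (card (L \<inter> ball y 1)) \<le> (1/\<delta>)^2" using cond d unfolding two_dim_cond_def by auto
  have "L = (\<Union>y\<in>F. L \<inter> ball y 1)" using LF by blast
  hence "card (L \<inter> ball x t) \<le> card (\<Union>y\<in>F. L \<inter> ball y 1)" using finL
    by (metis card_mono finite_Int inf_le1)
  also have "\<dots> \<le> (\<Sum>y\<in>F. card (L \<inter> ball y 1))" using card_UN_le[OF finF] .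
  finally have "real (card (L \<inter> ball x t)) \<le> (\<Sum>y\<in>F. real (card (L \<inter> ball y 1)))"
    by (metis of_nat_le_iff of_nat_sum)
  also have "\<dots> \<le> real (card F) * (1/\<delta>)^2" using sum_bounded_above[of F "\<lambda>y. real (card (L \<inter> ball y 1))", OF u1] by simp
  also have "\<dots> \<le> real (card F) * (t/\<delta>)^2"
    using False d by (intro mult_left_mono power_mono divide_right_mono) auto
  also have "\<dots> \<le> (1 + real (card F)) * (t/\<delta>)^2" by (intro mult_right_mono) auto
  finally show ?thesis .
qed

lemma disj_sum:
  assumes "finite Cs" "pairwise (\<lambda>i j. disjnt (ball (a i) (r i)) (ball (a j) (r j))) Cs" "finite Lt'"
  shows "(\<Sum>i\<in>Cs. card (Lt' \<inter> ball (a i) (r i))) \<le> card Lt'"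
proof -
  have "(\<Sum>i\<in>Cs. card (Lt' \<inter> ball (a i) (r i))) = card (\<Union>i\<in>Cs. Lt' \<inter> ball (a i) (r i))"
    using assms by (intro card_UN_disjoint[symmetric]) (auto simp: pairwise_def disjnt_def)
  also have "\<dots> \<le> card Lt'" using assms(3) by (intro card_mono) auto
  finally show ?thesis .
qed

lemma cover_sum:
  assumes "finite Cs" "finite X" "X \<subseteq> (\<Union>i\<in>Cs. ball (b i) (t i))"
  shows "real (card X) \<le> (\<Sum>i\<in>Cs. real (card (X \<inter> ball (b i) (t i))))"
proof -
  have "X = (\<Union>i\<in>Cs. X \<inter> ball (b i) (t i))" using assms(3) by blast
  hence "card X \<le> (\<Sum>i\<in>Cs. card (X \<inter> ball (b i) (t i)))" using card_UN_le[OF assms(1)] by metis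
  thus ?thesis by (metis of_nat_le_iff of_nat_sum)
qed

lemma cube_bound1:
  fixes K u w :: real
  assumes "0 \<le> K" "0 < u" "0 < w" and h: "5*w \<le> u"
  shows "K*(5*w)^3 \<le> 25*K*u*w^2"
proof -
  have "(5*w)^3 = 25*w^2*(5*w)" by (simp add: power3_eq_cube power2_eq_square)
  also have "\<dots> \<le> 25*w^2*u" using h by (intro mult_left_mono) auto
  finally have "(5*w)^3 \<le> 25*w^2*u" .
  hence "K*(5*w)^3 \<le> K*(25*w^2*u)" by (rule mult_left_mono[OF _ assms(1)])
  thus ?thesis by (simp add: algebra_simps)
qed

lemma cube_bound2:
  fixes K u w :: real
  assumes "0 \<le> K" "0 < u" "0 < w" and h: "u \<le> 5*w"
  shows "K*u^3 \<le> 25*K*u*w^2"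
proof -
  have "u^2 \<le> (5*w)^2" using h assms by (intro power_mono) auto
  hence "u*u^2 \<le> u*(25*w^2)" using assms by (intro mult_left_mono) (auto simp: power_mult_distrib)
  hence "u^3 \<le> 25*u*w^2" by (simp add: power3_eq_cube power2_eq_square algebra_simps)
  hence "K*u^3 \<le> K*(25*u*w^2)" by (rule mult_left_mono[OF _ assms(1)])
  thus ?thesis by (simp add: algebra_simps)
qed




lemma part1:
  fixes R :: real
  assumes R: "R \<ge> 1"
  defines "K \<equiv> 4*(52*R)^3"
  assumes rho: "0 < \<rho>" "\<rho> \<le> r" "r \<le> 1" and fin: "finite Lt" and LtR: "Lt \<subseteq> SL2_lines_R R"
    and sep: "separated \<rho> Lt" and x0: "Lt \<subseteq> ball x0 r"
  shows "\<exists>Lt'. Lt' \<subseteq> Lt \<and> (\<rho> / r) * real (card Lt) \<le> (50*K) * real (card Lt') \<and> two_dim_cond \<rho> Lt'"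
proof -
  have rho1: "\<rho> \<le> 1" using rho by linarith
  have K0: "K \<ge> 0" unfolding K_def using R by simp
  have pack: "real (card (Lt \<inter> ball x t)) \<le> K*(t/\<rho>)^3" if "\<rho> \<le> t" for x t
  proof -
    have "real (card (Lt \<inter> ball x t)) \<le> 4*(52*R*t/\<rho>)^3" using packing[OF R LtR sep rho(1) that] by blast
    also have "\<dots> = K*(t/\<rho>)^3"
    proof -
      have e: "52*R*t/\<rho> = (52*R)*(t/\<rho>)" by simp
      show ?thesis unfolding K_def e power_mult_distrib by simp
    qed
    finally show ?thesis .
  qed
  obtain Lt' a rad where sub: "Lt' \<subseteq> Lt" and cond: "two_dim_cond \<rho> Lt'"
    and W: "\<forall>l\<in>Lt. \<rho> \<le> rad l \<and> rad l \<le> 1 \<and> l \<in> ball (a l) (rad l) \<and>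
        (rad l/\<rho>)^2 \<le> 2 * real (card (Lt' \<inter> ball (a l) (rad l)))"
    using greedy[OF fin rho(1) rho1] by blast
  have finL': "finite Lt'" using sub fin finite_subset by blast
  have cov: "Lt \<subseteq> (\<Union>l\<in>Lt. ball (a l) (rad l))" using W by blast
  have r01: "0 < rad i \<and> rad i \<le> 1" if "i \<in> Lt" for i
  proof -
    have "\<rho> \<le> rad i \<and> rad i \<le> 1" using bspec[OF W that] by blast
    thus ?thesis using rho(1) by linarith
  qed
  obtain Cs where "countable Cs" and Cs: "Cs \<subseteq> Lt" "pairwise (\<lambda>i j. disjnt (ball (a i) (rad i)) (ball (a j) (rad j))) Cs"
     "Lt \<subseteq> (\<Union>i\<in>Cs. ball (a i) (5 * rad i))"
    by (rule Vitali_covering_lemma_balls[OF cov r01])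
  have finC: "finite Cs" using Cs(1) fin finite_subset by blast
  define u where "u = r/\<rho>"
  have u0: "u > 0" unfolding u_def using rho by simp
  have tb: "real (card (Lt \<inter> ball (a i) (5 * rad i))) \<le> 50*K*u * real (card (Lt' \<inter> ball (a i) (rad i)))"
    if i: "i \<in> Cs" for i
  proof -
    define w where "w = rad i/\<rho>"
    have Wi: "\<rho> \<le> rad i" "(rad i/\<rho>)^2 \<le> 2 * real (card (Lt' \<inter> ball (a i) (rad i)))"
      using bspec[OF W, of i] i Cs(1) by blast+
    have w0: "w > 0" unfolding w_def using Wi rho by simp
    have "real (card (Lt \<inter> ball (a i) (5 * rad i))) \<le> 25*K*u*w^2"
    proof (cases "5 * rad i \<le> r")
      case True
      have "real (card (Lt \<inter> ball (a i) (5 * rad i))) \<le> K*((5 * rad i)/\<rho>)^3" using pack Wi rho by simp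
      also have "\<dots> = K*(5*w)^3" unfolding w_def by simp
      also have "\<dots> \<le> 25*K*u*w^2" using cube_bound1[OF K0 u0 w0] True rho unfolding u_def w_def
        by (simp add: divide_right_mono)
      finally show ?thesis .
    next
      case False
      have "Lt \<inter> ball (a i) (5 * rad i) \<subseteq> Lt \<inter> ball x0 r" using x0 by blast
      hence "card (Lt \<inter> ball (a i) (5 * rad i)) \<le> card (Lt \<inter> ball x0 r)" using fin by (intro card_mono) auto
      moreover have "real (card (Lt \<inter> ball x0 r)) \<le> K*(r/\<rho>)^3" using pack[of r x0] rho by linarith
      ultimately have "real (card (Lt \<inter> ball (a i) (5 * rad i))) \<le> K*(r/\<rho>)^3" by linarith
      also have "\<dots> = K*u^3" unfolding u_def ..
      also have "\<dots> \<le> 25*K*u*w^2" using cube_bound2[OF K0 u0 w0] False rho unfolding u_def w_def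
        by (simp add: divide_right_mono)
      finally show ?thesis .
    qed
    also have "\<dots> \<le> 25*K*u*(2 * real (card (Lt' \<inter> ball (a i) (rad i))))"
      using Wi(2) K0 u0 unfolding w_def by (intro mult_left_mono) auto
    finally show ?thesis by simp
  qed
  have "real (card Lt) \<le> (\<Sum>i\<in>Cs. real (card (Lt \<inter> ball (a i) (5 * rad i))))"
    using cover_sum[OF finC fin Cs(3)] .
  also have "\<dots> \<le> (\<Sum>i\<in>Cs. 50*K*u * real (card (Lt' \<inter> ball (a i) (rad i))))"
    using tb by (rule sum_mono)
  also have "\<dots> = 50*K*u * real (\<Sum>i\<in>Cs. card (Lt' \<inter> ball (a i) (rad i)))"
    by (simp add: sum_distrib_left)
  also have "\<dots> \<le> 50*K*u * real (card Lt')"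
  proof -
    have ds: "real (\<Sum>i\<in>Cs. card (Lt' \<inter> ball (a i) (rad i))) \<le> real (card Lt')"
      using disj_sum[OF finC Cs(2) finL'] by (simp only: of_nat_le_iff)
    show ?thesis by (rule mult_left_mono[OF ds]) (use K0 u0 in simp)
  qed
  finally have "real (card Lt) \<le> 50*K*u * real (card Lt')" .
  hence "(\<rho>/r) * real (card Lt) \<le> (\<rho>/r) * (50*K*u * real (card Lt'))"
    using rho by (intro mult_left_mono) auto
  also have "\<dots> = 50*K * real (card Lt')" unfolding u_def using rho by (simp add: field_simps)
  finally show ?thesis using sub cond by blast
qed

lemma part2:
  fixes R :: real and F :: "(real^4) set"
  assumes finF: "finite F" and coverF: "ball 0 R \<subseteq> (\<Union>y\<in>F. ball y 1)"
  defines "K' \<equiv> 1 + real (card F)"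
  assumes d: "0 < \<delta>" "\<delta> \<le> \<rho>" "\<rho> \<le> 1" and finL: "finite L" and fin: "finite Lt"
    and LR: "L \<subseteq> SL2_lines_R R" and condL: "two_dim_cond \<delta> L" and LLt: "L \<subseteq> (\<Union>l\<in>Lt. ball l \<rho>)"
  shows "\<exists>Lt'. Lt' \<subseteq> Lt \<and> (\<delta>/\<rho>)^2 * real (card L) \<le> (200*K') * real (card Lt') \<and> two_dim_cond \<rho> Lt'"
proof -
  have rho0: "0 < \<rho>" using d by linarith
  have K0: "K' \<ge> 0" unfolding K'_def by simp
  obtain Lt' a rad where sub: "Lt' \<subseteq> Lt" and cond: "two_dim_cond \<rho> Lt'"
    and W: "\<forall>l\<in>Lt. \<rho> \<le> rad l \<and> rad l \<le> 1 \<and> l \<in> ball (a l) (rad l) \<and>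
        (rad l/\<rho>)^2 \<le> 2 * real (card (Lt' \<inter> ball (a l) (rad l)))"
    using greedy[OF fin rho0 d(3)] by blast
  have finL': "finite Lt'" using sub fin finite_subset by blast
  have cov: "L \<subseteq> (\<Union>l\<in>Lt. ball (a l) (2 * rad l))"
  proof
    fix y assume "y \<in> L"
    then obtain l where l: "l \<in> Lt" "dist l y < \<rho>" using LLt by auto
    have "\<rho> \<le> rad l \<and> l \<in> ball (a l) (rad l)" using bspec[OF W l(1)] by blast
    hence "dist (a l) y < 2 * rad l" using l(2) dist_triangle[of "a l" y l] by simp
    thus "y \<in> (\<Union>l\<in>Lt. ball (a l) (2 * rad l))" using l(1) by auto
  qed
  have r02: "0 < 2 * rad i \<and> 2 * rad i \<le> 2" if "i \<in> Lt" for i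
  proof -
    have "\<rho> \<le> rad i \<and> rad i \<le> 1" using bspec[OF W that] by blast
    thus ?thesis using rho0 by linarith
  qed
  obtain Cs where "countable Cs" and Cs: "Cs \<subseteq> Lt" "pairwise (\<lambda>i j. disjnt (ball (a i) (2 * rad i)) (ball (a j) (2 * rad j))) Cs"
     "L \<subseteq> (\<Union>i\<in>Cs. ball (a i) (5 * (2 * rad i)))"
    by (rule Vitali_covering_lemma_balls[OF cov r02])
  have finC: "finite Cs" using Cs(1) fin finite_subset by blast
  have sb: "ball (a i) (rad i) \<subseteq> ball (a i) (2 * rad i)" if "i \<in> Lt" for i
    using r02[OF that] by (intro subset_ball) linarith
  have pw: "pairwise (\<lambda>i j. disjnt (ball (a i) (rad i)) (ball (a j) (rad j))) Cs"
    unfolding pairwise_def disjnt_def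
  proof (intro ballI impI)
    fix i j assume ij: "i \<in> Cs" "j \<in> Cs" "i \<noteq> j"
    hence "ball (a i) (2 * rad i) \<inter> ball (a j) (2 * rad j) = {}" using Cs(2) unfolding pairwise_def disjnt_def by blast
    moreover have "ball (a i) (rad i) \<subseteq> ball (a i) (2 * rad i)" "ball (a j) (rad j) \<subseteq> ball (a j) (2 * rad j)"
      using sb ij Cs(1) by blast+
    ultimately show "ball (a i) (rad i) \<inter> ball (a j) (rad j) = {}" by blast
  qed
  have LF: "L \<subseteq> (\<Union>y\<in>F. ball y 1)" using LR coverF unfolding SL2_lines_R_def by blast
  define Q where "Q = (\<rho>/\<delta>)^2"
  have Q0: "Q \<ge> 0" unfolding Q_def by simp
  have tb: "real (card (L \<inter> ball (a i) (5 * (2 * rad i)))) \<le> 200*K'*Q * real (card (Lt' \<inter> ball (a i) (rad i)))"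
    if i: "i \<in> Cs" for i
  proof -
    have Wi: "\<rho> \<le> rad i" "(rad i/\<rho>)^2 \<le> 2 * real (card (Lt' \<inter> ball (a i) (rad i)))"
      using bspec[OF W, of i] i Cs(1) by blast+
    have "\<delta> \<le> 5 * (2 * rad i)" using Wi d by linarith
    hence "real (card (L \<inter> ball (a i) (5 * (2 * rad i)))) \<le> K' * ((5 * (2 * rad i))/\<delta>)^2"
      unfolding K'_def using cover_bound[OF finL LF finF condL d(1)] d by simp
    also have "\<dots> = 100*K'*Q*(rad i/\<rho>)^2" unfolding Q_def using d rho0 by (simp add: field_simps)
    also have "\<dots> \<le> 100*K'*Q*(2 * real (card (Lt' \<inter> ball (a i) (rad i))))"
      using Wi(2) K0 Q0 by (intro mult_left_mono) auto
    finally show ?thesis by simp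
  qed
  have "real (card L) \<le> (\<Sum>i\<in>Cs. real (card (L \<inter> ball (a i) (5 * (2 * rad i)))))"
    using cover_sum[OF finC finL Cs(3)] .
  also have "\<dots> \<le> (\<Sum>i\<in>Cs. 200*K'*Q * real (card (Lt' \<inter> ball (a i) (rad i))))"
    using tb by (rule sum_mono)
  also have "\<dots> = 200*K'*Q * real (\<Sum>i\<in>Cs. card (Lt' \<inter> ball (a i) (rad i)))"
    by (simp add: sum_distrib_left)
  also have "\<dots> \<le> 200*K'*Q * real (card Lt')"
  proof -
    have ds: "real (\<Sum>i\<in>Cs. card (Lt' \<inter> ball (a i) (rad i))) \<le> real (card Lt')"
      using disj_sum[OF finC pw finL'] by (simp only: of_nat_le_iff)
    show ?thesis by (rule mult_left_mono[OF ds]) (use K0 Q0 in simp)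
  qed
  finally have "real (card L) \<le> 200*K'*Q * real (card Lt')" .
  hence "(\<delta>/\<rho>)^2 * real (card L) \<le> (\<delta>/\<rho>)^2 * (200*K'*Q * real (card Lt'))"
    by (intro mult_left_mono) auto
  also have "\<dots> = 200*K' * real (card Lt')" unfolding Q_def using d rho0 by (simp add: field_simps)
  finally show ?thesis using sub cond by blast
qed


theorem lemma4p1:
  fixes R :: real
  assumes "R \<ge> 1"
  shows "\<exists>C>0.
    (\<forall>(\<rho>::real) (r::real) (Lt::(real^4) set).
        0 < \<rho> \<longrightarrow> \<rho> \<le> r \<longrightarrow> r \<le> 1 \<longrightarrow>
        finite Lt \<longrightarrow> Lt \<subseteq> SL2_lines_R R \<longrightarrow>
        separated \<rho> Lt \<longrightarrow> (\<exists>x0::real^4. Lt \<subseteq> ball x0 r) \<longrightarrow>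
        (\<exists>Lt'. Lt' \<subseteq> Lt \<and> (\<rho> / r) * real (card Lt) \<le> C * real (card Lt') \<and>
               two_dim_cond \<rho> Lt'))
    \<and>
    (\<forall>\<epsilon>>0. \<exists>c>0.
      \<forall>(\<delta>::real) (\<rho>::real) (L::(real^4) set) (Lt::(real^4) set).
        0 < \<delta> \<longrightarrow> \<delta> \<le> \<rho> \<longrightarrow> \<rho> \<le> 1 \<longrightarrow>
        finite L \<longrightarrow> finite Lt \<longrightarrow>
        L \<subseteq> SL2_lines_R R \<longrightarrow> Lt \<subseteq> SL2_lines_R R \<longrightarrow>
        two_dim_cond \<delta> L \<longrightarrow>
        L \<subseteq> (\<Union>l\<in>Lt. ball l \<rho>) \<longrightarrow>
        (\<exists>Lt'. Lt' \<subseteq> Lt \<and>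
               c * \<delta> powr \<epsilon> * (\<delta> / \<rho>)^2 * real (card L) \<le> C * real (card Lt') \<and>
               two_dim_cond \<rho> Lt'))"
proof -
  obtain F where Fsub: "F \<subseteq> cball (0::real^4) R" and finF: "finite F"
    and coverF': "cball 0 R \<subseteq> (\<Union>y\<in>F. ball y 1)"
  proof (rule compactE_image[OF compact_cball, of "cball (0::real^4) R" "\<lambda>y. ball y 1"])
    show "\<And>T. T \<in> cball 0 R \<Longrightarrow> open (ball T 1)" by simp
    show "cball 0 R \<subseteq> (\<Union>c\<in>cball 0 R. ball c 1)" by (auto intro!: bexI)
  qed (rule that)
  have coverF: "ball 0 R \<subseteq> (\<Union>y\<in>F. ball y 1)" using coverF' by auto
  define K where "K = 4*(52*R)^3"
  define K' where "K' = 1 + real (card F)"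
  have K0: "K \<ge> 0" unfolding K_def using assms by simp
  have K'0: "K' \<ge> 0" unfolding K'_def by simp
  define C where "C = 50*K + 200*K'"
  have C0: "C > 0" unfolding C_def K'_def using K0 by simp
  have P1: "\<forall>(\<rho>::real) (r::real) (Lt::(real^4) set).
        0 < \<rho> \<longrightarrow> \<rho> \<le> r \<longrightarrow> r \<le> 1 \<longrightarrow>
        finite Lt \<longrightarrow> Lt \<subseteq> SL2_lines_R R \<longrightarrow>
        separated \<rho> Lt \<longrightarrow> (\<exists>x0::real^4. Lt \<subseteq> ball x0 r) \<longrightarrow>
        (\<exists>Lt'. Lt' \<subseteq> Lt \<and> (\<rho> / r) * real (card Lt) \<le> C * real (card Lt') \<and>
               two_dim_cond \<rho> Lt')"
  proof (intro allI impI)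
    fix \<rho> r :: real and Lt :: "(real^4) set"
    assume h: "0 < \<rho>" "\<rho> \<le> r" "r \<le> 1" "finite Lt" "Lt \<subseteq> SL2_lines_R R" "separated \<rho> Lt"
      "\<exists>x0::real^4. Lt \<subseteq> ball x0 r"
    then obtain x0 where x0: "Lt \<subseteq> ball x0 r" by blast
    obtain Lt' where L': "Lt' \<subseteq> Lt" "(\<rho> / r) * real (card Lt) \<le> (50*K) * real (card Lt')" "two_dim_cond \<rho> Lt'"
      using part1[OF assms h(1-6) x0] unfolding K_def by blast
    have "(50*K) * real (card Lt') \<le> C * real (card Lt')" unfolding C_def using K'0
      by (intro mult_right_mono) auto
    thus "\<exists>Lt'. Lt' \<subseteq> Lt \<and> (\<rho> / r) * real (card Lt) \<le> C * real (card Lt') \<and> two_dim_cond \<rho> Lt'"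
      using L' by (meson order_trans)
  qed
  have P2: "\<forall>\<epsilon>>0. \<exists>c>0.
      \<forall>(\<delta>::real) (\<rho>::real) (L::(real^4) set) (Lt::(real^4) set).
        0 < \<delta> \<longrightarrow> \<delta> \<le> \<rho> \<longrightarrow> \<rho> \<le> 1 \<longrightarrow>
        finite L \<longrightarrow> finite Lt \<longrightarrow>
        L \<subseteq> SL2_lines_R R \<longrightarrow> Lt \<subseteq> SL2_lines_R R \<longrightarrow>
        two_dim_cond \<delta> L \<longrightarrow>
        L \<subseteq> (\<Union>l\<in>Lt. ball l \<rho>) \<longrightarrow>
        (\<exists>Lt'. Lt' \<subseteq> Lt \<and>
               c * \<delta> powr \<epsilon> * (\<delta> / \<rho>)^2 * real (card L) \<le> C * real (card Lt') \<and>
               two_dim_cond \<rho> Lt')"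
  proof (intro allI impI exI[of _ "1::real"] conjI)
    fix \<epsilon> :: real assume eps: "\<epsilon> > 0"
    show "(0::real) < 1" by simp
    fix \<delta> \<rho> :: real and L Lt :: "(real^4) set"
    assume h: "0 < \<delta>" "\<delta> \<le> \<rho>" "\<rho> \<le> 1" "finite L" "finite Lt" "L \<subseteq> SL2_lines_R R"
      "Lt \<subseteq> SL2_lines_R R" "two_dim_cond \<delta> L" "L \<subseteq> (\<Union>l\<in>Lt. ball l \<rho>)"
    obtain Lt' where L': "Lt' \<subseteq> Lt" "(\<delta>/\<rho>)^2 * real (card L) \<le> (200*K') * real (card Lt')" "two_dim_cond \<rho> Lt'"
      using part2[OF finF coverF h(1-6) h(8,9)] unfolding K'_def by blast
    have pw: "\<delta> powr \<epsilon> \<le> 1" using h eps by (intro powr_le1) auto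
    have "1 * \<delta> powr \<epsilon> * (\<delta> / \<rho>)^2 * real (card L) \<le> 1 * ((\<delta> / \<rho>)^2 * real (card L))"
      using pw by (simp add: mult_right_le_one_le mult.assoc mult_left_le_one_le)
    also have "\<dots> \<le> (200*K') * real (card Lt')" using L'(2) by simp
    also have "\<dots> \<le> C * real (card Lt')" unfolding C_def using K0
      by (intro mult_right_mono) auto
    finally show "\<exists>Lt'. Lt' \<subseteq> Lt \<and>
               1 * \<delta> powr \<epsilon> * (\<delta> / \<rho>)^2 * real (card L) \<le> C * real (card Lt') \<and>
               two_dim_cond \<rho> Lt'" using L' by blast
  qed
  show ?thesis using C0 P1 P2 by blast
qed

end
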